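(* Let $d\ge2$, $x\in\mathbb{R}^d$, $\theta\in\{\pm1\}^d$, $p := |\{l:\theta_l=1\}|-1$, and $v := x - \frac{\theta^\top x - p}{d}\theta$. Suppose $v\notin[0,1]^d$ and that there is exactly one index $i\in\{1,\dots,d\}$ with ($v_i>1$ and $\theta_i=1$) or ($v_i<0$ and $\theta_i=-1$). Set $\widetilde p := p-1$ if $v_i>1$ and $\widetilde p:=p$ if $v_i<0$. Let $\widetilde x$ and $\widetilde\theta$ be obtained from $x$ and $\theta$ by deleting the $i$-th component (keeping the original indices $j\neq i$), and let $\widetilde v := \widetilde x - \frac{\widetilde\theta^\top\widetilde x - \widetilde p}{d-1}\widetilde\theta$. Then for every $j\ne i$: (i) if $\theta_j = 1$ then $\widetilde v_j > v_j$; (ii) if $\theta_j=-1$ then $\widetilde v_j< v_j$. *)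

theory Defs
  imports Complex_Main
begin

text \<open>Vectors in R^d are represented as functions nat => real on the index set {1..d}.\<close>

definition shift_vec :: "nat set \<Rightarrow> (nat \<Rightarrow> real) \<Rightarrow> (nat \<Rightarrow> real) \<Rightarrow> real \<Rightarrow> nat \<Rightarrow> real" where
  "shift_vec I x \<theta> p l = x l - ((\<Sum>k\<in>I. \<theta> k * x k) - p) / real (card I) * \<theta> l"

definition p_of :: "nat \<Rightarrow> (nat \<Rightarrow> real) \<Rightarrow> real" where
  "p_of d \<theta> = real (card {l\<in>{1..d}. \<theta> l = 1}) - 1"

end

theory Submission
  imports Defs
begin

theorem theorem8:
  fixes d :: nat and x \<theta> :: "nat \<Rightarrow> real" and i :: nat
  assumes "d \<ge> 2"
    and "\<forall>l\<in>{1..d}. \<theta> l = 1 \<or> \<theta> l = -1"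
    and "\<exists>l\<in>{1..d}. shift_vec {1..d} x \<theta> (p_of d \<theta>) l < 0
                      \<or> shift_vec {1..d} x \<theta> (p_of d \<theta>) l > 1"
    and "i \<in> {1..d}"
    and "(shift_vec {1..d} x \<theta> (p_of d \<theta>) i > 1 \<and> \<theta> i = 1)
         \<or> (shift_vec {1..d} x \<theta> (p_of d \<theta>) i < 0 \<and> \<theta> i = -1)"
    and "\<forall>j\<in>{1..d}. ((shift_vec {1..d} x \<theta> (p_of d \<theta>) j > 1 \<and> \<theta> j = 1)
         \<or> (shift_vec {1..d} x \<theta> (p_of d \<theta>) j < 0 \<and> \<theta> j = -1)) \<longrightarrow> j = i"
  shows "\<forall>j\<in>{1..d} - {i}.
    (let v = shift_vec {1..d} x \<theta> (p_of d \<theta>);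
         pt = (if v i > 1 then p_of d \<theta> - 1 else p_of d \<theta>);
         vt = shift_vec ({1..d} - {i}) x \<theta> pt
     in (\<theta> j = 1 \<longrightarrow> vt j > v j) \<and> (\<theta> j = -1 \<longrightarrow> vt j < v j))"
proof -
  define p where "p = p_of d \<theta>"
  define S where "S = (\<Sum>k\<in>{1..d}. \<theta> k * x k)"
  define c where "c = (S - p) / real d"
  define v where "v = shift_vec {1..d} x \<theta> p"
  define pt where "pt = (if v i > 1 then p - 1 else p)"
  define S' where "S' = (\<Sum>k\<in>{1..d} - {i}. \<theta> k * x k)"
  define c' where "c' = (S' - pt) / (real d - 1)"
  have dpos: "real d - 1 > 0" "real d > 0" using assms(1) by auto
  have cd: "c * real d = S - p" unfolding c_def using dpos by simp
  have S'eq: "S' = S - \<theta> i * x i"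
    unfolding S'_def S_def using assms(4) by (simp add: sum_diff1)
  have card: "real (card ({1..d} - {i})) = real d - 1"
    using assms(4) assms(1) by (simp add: of_nat_diff)
  have vl: "\<And>l. v l = x l - c * \<theta> l"
    unfolding v_def shift_vec_def c_def S_def by simp
  have vtl: "\<And>l. shift_vec ({1..d} - {i}) x \<theta> pt l = x l - c' * \<theta> l"
    unfolding shift_vec_def c'_def S'_def card by simp
  have lt: "c' < c"
  proof -
    have "S' - pt < c * (real d - 1)"
    proof (cases "v i > 1 \<and> \<theta> i = 1")
      case True
      then have "pt = p - 1" unfolding pt_def by simp
      moreover have "x i = v i + c" using vl[of i] True by simp
      ultimately show ?thesis using True S'eq cd
        by (simp add: algebra_simps)
    next
      case False
      then have "v i < 0" "\<theta> i = -1" using assms(5) unfolding v_def p_def by auto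
      moreover have "pt = p" unfolding pt_def using \<open>v i < 0\<close> by simp
      moreover have "x i = v i - c" using vl[of i] \<open>\<theta> i = -1\<close> by simp
      ultimately show ?thesis using S'eq cd
        by (simp add: algebra_simps)
    qed
    then show ?thesis unfolding c'_def using dpos by (simp add: divide_less_eq)
  qed
  show ?thesis
    unfolding Let_def
    using lt vtl vl unfolding v_def pt_def p_def by auto
qed

end
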